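(* Let $S$ be an intra-regular $\Gamma$-AG$^{**}$-groupoid and $Q\subseteq S$ nonempty with $Q\Gamma Q\subseteq Q$. Then $Q$ is a $\Gamma$-quasi ideal of $S$ if and only if $S\Gamma Q\cap Q\Gamma S=Q$.
   Context: Let $S$ and $\Gamma$ be nonempty sets with a map $S\times\Gamma\times S\to S$, $(x,\gamma,y)\mapsto x\gamma y$. $S$ is a $\Gamma$-AG-groupoid if $(x\gamma y)\delta z=(z\gamma y)\delta x$ for all $x,y,z\in S$, $\gamma,\delta\in\Gamma$; it is a $\Gamma$-AG$^{**}$-groupoid if moreover $a\alpha(b\beta c)=b\alpha(a\beta c)$ for all $a,b,c\in S$, $\alpha,\beta\in\Gamma$. For subsets $A,B\subseteq S$, $A\Gamma B=\{a\gamma b: a\in A,\gamma\in\Gamma,b\in B\}$. $S$ is intra-regular if for every $a\in S$ there exist $x,y\in S$ and $\beta,\gamma,\delta\in\Gamma$ with $a=(x\beta(a\delta a))\gamma y$. A nonempty subset $Q$ with $Q\Gamma Q\subseteq Q$ is a $\Gamma$-quasi ideal if $S\Gamma Q\cap Q\Gamma S\subseteq Q$. *)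

theory Defs
  imports Main
begin

definition gamma_groupoid :: "'a set \<Rightarrow> 'g set \<Rightarrow> ('a \<Rightarrow> 'g \<Rightarrow> 'a \<Rightarrow> 'a) \<Rightarrow> bool" where
  "gamma_groupoid S G op \<longleftrightarrow> S \<noteq> {} \<and> G \<noteq> {} \<and>
     (\<forall>x\<in>S. \<forall>g\<in>G. \<forall>y\<in>S. op x g y \<in> S)"

definition gamma_AG_groupoid :: "'a set \<Rightarrow> 'g set \<Rightarrow> ('a \<Rightarrow> 'g \<Rightarrow> 'a \<Rightarrow> 'a) \<Rightarrow> bool" where
  "gamma_AG_groupoid S G op \<longleftrightarrow> gamma_groupoid S G op \<and>
     (\<forall>x\<in>S. \<forall>y\<in>S. \<forall>z\<in>S. \<forall>g\<in>G. \<forall>d\<in>G. op (op x g y) d z = op (op z g y) d x)"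

definition gamma_AG2_groupoid :: "'a set \<Rightarrow> 'g set \<Rightarrow> ('a \<Rightarrow> 'g \<Rightarrow> 'a \<Rightarrow> 'a) \<Rightarrow> bool" where
  "gamma_AG2_groupoid S G op \<longleftrightarrow> gamma_AG_groupoid S G op \<and>
     (\<forall>a\<in>S. \<forall>b\<in>S. \<forall>c\<in>S. \<forall>\<alpha>\<in>G. \<forall>\<beta>\<in>G. op a \<alpha> (op b \<beta> c) = op b \<alpha> (op a \<beta> c))"

definition gset_prod :: "('a \<Rightarrow> 'g \<Rightarrow> 'a \<Rightarrow> 'a) \<Rightarrow> 'a set \<Rightarrow> 'g set \<Rightarrow> 'a set \<Rightarrow> 'a set" where
  "gset_prod op A G B = {op a g b | a g b. a \<in> A \<and> g \<in> G \<and> b \<in> B}"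

definition intra_regular :: "'a set \<Rightarrow> 'g set \<Rightarrow> ('a \<Rightarrow> 'g \<Rightarrow> 'a \<Rightarrow> 'a) \<Rightarrow> bool" where
  "intra_regular S G op \<longleftrightarrow> (\<forall>a\<in>S. \<exists>x\<in>S. \<exists>y\<in>S. \<exists>\<beta>\<in>G. \<exists>\<gamma>\<in>G. \<exists>\<delta>\<in>G.
      a = op (op x \<beta> (op a \<delta> a)) \<gamma> y)"

definition gamma_quasi_ideal :: "'a set \<Rightarrow> 'g set \<Rightarrow> ('a \<Rightarrow> 'g \<Rightarrow> 'a \<Rightarrow> 'a) \<Rightarrow> 'a set \<Rightarrow> bool" where
  "gamma_quasi_ideal S G op Q \<longleftrightarrow> Q \<noteq> {} \<and> Q \<subseteq> S \<and> gset_prod op Q G Q \<subseteq> Q \<and>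
     gset_prod op S G Q \<inter> gset_prod op Q G S \<subseteq> Q"

end

theory Submission
  imports Defs
begin

theorem mainTheorem8:
  fixes S :: "'a set" and G :: "'g set" and op :: "'a \<Rightarrow> 'g \<Rightarrow> 'a \<Rightarrow> 'a"
  assumes "gamma_AG2_groupoid S G op"
    and "intra_regular S G op"
    and "Q \<subseteq> S" and "Q \<noteq> {}"
    and "gset_prod op Q G Q \<subseteq> Q"
  shows "gamma_quasi_ideal S G op Q \<longleftrightarrow> gset_prod op S G Q \<inter> gset_prod op Q G S = Q"
proof -
  have cl: "\<And>x g y. x \<in> S \<Longrightarrow> g \<in> G \<Longrightarrow> y \<in> S \<Longrightarrow> op x g y \<in> S"
    using assms(1) unfolding gamma_AG2_groupoid_def gamma_AG_groupoid_def gamma_groupoid_def by blast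
  have LI: "\<And>x y z g d. x \<in> S \<Longrightarrow> y \<in> S \<Longrightarrow> z \<in> S \<Longrightarrow> g \<in> G \<Longrightarrow> d \<in> G \<Longrightarrow>
      op (op x g y) d z = op (op z g y) d x"
    using assms(1) unfolding gamma_AG2_groupoid_def gamma_AG_groupoid_def by blast
  have AG2: "\<And>a b c al be. a \<in> S \<Longrightarrow> b \<in> S \<Longrightarrow> c \<in> S \<Longrightarrow> al \<in> G \<Longrightarrow> be \<in> G \<Longrightarrow>
      op a al (op b be c) = op b al (op a be c)"
    using assms(1) unfolding gamma_AG2_groupoid_def by blast
  have IR: "\<And>a. a \<in> S \<Longrightarrow> \<exists>x\<in>S. \<exists>y\<in>S. \<exists>\<beta>\<in>G. \<exists>\<gamma>\<in>G. \<exists>\<delta>\<in>G.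
      a = op (op x \<beta> (op a \<delta> a)) \<gamma> y"
    using assms(2) unfolding intra_regular_def by blast
  have sub: "Q \<subseteq> gset_prod op S G Q \<inter> gset_prod op Q G S"
  proof
    fix a assume aQ: "a \<in> Q"
    hence aS: "a \<in> S" using assms(3) by blast
    obtain x y b g d where xs: "x \<in> S" and ys: "y \<in> S" and bG: "b \<in> G" and gG: "g \<in> G"
      and dG: "d \<in> G" and ae: "a = op (op x b (op a d a)) g y" using IR[OF aS] by blast
    define w where "w = op a d a"
    have wQ: "w \<in> Q" using assms(5) aQ dG unfolding w_def gset_prod_def by blast
    hence wS: "w \<in> S" using assms(3) by blast
    have "a = op (op y b w) g x" using ae LI[OF xs wS ys bG gG] w_def by simp
    also have "op y b w = op a b (op y d a)" unfolding w_def using AG2[OF ys aS aS bG dG] .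
    finally have "a = op (op a b (op y d a)) g x" .
    also have "\<dots> = op (op x b (op y d a)) g a" using LI[OF aS cl[OF ys dG aS] xs bG gG] .
    finally have a1: "a \<in> gset_prod op S G Q"
      unfolding gset_prod_def using cl[OF xs bG cl[OF ys dG aS]] gG aQ by blast
    obtain x' y' b' g' d' where "x' \<in> S" "y' \<in> S" "b' \<in> G" "g' \<in> G" "d' \<in> G"
      and ye: "y = op (op x' b' (op y d' y)) g' y'" using IR[OF ys] by blast
    define v where "v = op x' b' (op y d' y)"
    have vS: "v \<in> S" unfolding v_def using cl \<open>x' \<in> S\<close> \<open>b' \<in> G\<close> \<open>d' \<in> G\<close> ys by blast
    have ye2: "y = op v g' y'" using ye v_def by simp
    note y'S = \<open>y' \<in> S\<close> and g'G = \<open>g' \<in> G\<close>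
    have "a = op (op x b w) g (op v g' y')" using ae ye2 w_def by simp
    also have "\<dots> = op (op (op v g' y') b w) g x" using LI[OF xs wS cl[OF vS g'G y'S] bG gG] .
    also have "op (op v g' y') b w = op (op w g' y') b v" using LI[OF vS y'S wS g'G bG] .
    also have "op (op (op w g' y') b v) g x = op (op x b v) g (op w g' y')"
      using LI[OF cl[OF wS g'G y'S] vS xs bG gG] .
    also have "\<dots> = op w g (op (op x b v) g' y')" using AG2[OF cl[OF xs bG vS] wS y'S gG g'G] .
    finally have "a \<in> gset_prod op Q G S"
      unfolding gset_prod_def using wQ gG cl[OF cl[OF xs bG vS] g'G y'S] by blast
    with a1 show "a \<in> gset_prod op S G Q \<inter> gset_prod op Q G S" by blast
  qed
  show ?thesis using sub assms(3,4,5) unfolding gamma_quasi_ideal_def by blast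
qed

end
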